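(* Let $G$ be a finite graph and $H=(H_{ij})$ a matrix indexed by its vertices with $H_{ij}\ge0$, $H_{ij}=0$ unless $\langle ij\rangle$ is an edge, and $H_{ij}\le h$ for all edges. Suppose every vertex has degree at most $\lambda$. Let $G_{ij}(t)=[e^{Ht}]_{ij}$ and let $d_{ij}$ be the graph distance between vertices $i$ and $j$. Then for all vertices $i,j$ with $d_{ij}\ge1$ and all $0\le t<d_{ij}/(\lambda h e)$, $$G_{ij}(t)\le\left(\frac{\lambda h t e}{d_{ij}}\right)^{d_{ij}}\frac{1/e}{1-\lambda h t e/d_{ij}}.$$ *)

theory Defs
  imports Complex_Main
begin

definition simple_graph :: "('v \<Rightarrow> 'v \<Rightarrow> bool) \<Rightarrow> bool" where
  "simple_graph E \<longleftrightarrow> (\<forall>i j. E i j \<longrightarrow> E j i) \<and> (\<forall>i. \<not> E i i)"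

definition degree :: "('v \<Rightarrow> 'v \<Rightarrow> bool) \<Rightarrow> 'v \<Rightarrow> nat" where
  "degree E i = card {j. E i j}"

definition walk_len :: "('v \<Rightarrow> 'v \<Rightarrow> bool) \<Rightarrow> 'v \<Rightarrow> 'v \<Rightarrow> nat \<Rightarrow> bool" where
  "walk_len E i j n \<longleftrightarrow> (\<exists>p :: nat \<Rightarrow> 'v. p 0 = i \<and> p n = j \<and> (\<forall>k<n. E (p k) (p (Suc k))))"

definition connected_pair :: "('v \<Rightarrow> 'v \<Rightarrow> bool) \<Rightarrow> 'v \<Rightarrow> 'v \<Rightarrow> bool" where
  "connected_pair E i j \<longleftrightarrow> (\<exists>n. walk_len E i j n)"

text \<open>Graph distance (meaningful when i and j are connected).\<close>
definition graph_dist :: "('v \<Rightarrow> 'v \<Rightarrow> bool) \<Rightarrow> 'v \<Rightarrow> 'v \<Rightarrow> nat" where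
  "graph_dist E i j = (LEAST n. walk_len E i j n)"

fun mat_pow :: "('v::finite \<Rightarrow> 'v \<Rightarrow> real) \<Rightarrow> nat \<Rightarrow> 'v \<Rightarrow> 'v \<Rightarrow> real" where
  "mat_pow H 0 = (\<lambda>i j. if i = j then 1 else 0)"
| "mat_pow H (Suc k) = (\<lambda>i j. \<Sum>l\<in>UNIV. H i l * mat_pow H k l j)"

definition mat_exp_entry :: "('v::finite \<Rightarrow> 'v \<Rightarrow> real) \<Rightarrow> real \<Rightarrow> 'v \<Rightarrow> 'v \<Rightarrow> real" where
  "mat_exp_entry H t i j = (\<Sum>k. t ^ k / fact k * mat_pow H k i j)"

end

theory Submission
  imports Defs
begin

lemma mp_nonneg:
  assumes "\<And>a b. H a b \<ge> 0"
  shows "mat_pow H k i j \<ge> 0"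
  using assms by (induction k arbitrary: i j) (auto intro!: sum_nonneg mult_nonneg_nonneg)

lemma mp_bound:
  assumes "\<And>a b. H a b \<ge> 0" and "\<And>a. (\<Sum>l\<in>UNIV. H a l) \<le> c"
  shows "mat_pow H k i j \<le> c ^ k"
proof (induction k arbitrary: i j)
  case 0 then show ?case by auto
next
  case (Suc k)
  have "mat_pow H (Suc k) i j = (\<Sum>l\<in>UNIV. H i l * mat_pow H k l j)" by simp
  also have "\<dots> \<le> (\<Sum>l\<in>UNIV. H i l * c ^ k)"
    by (intro sum_mono mult_left_mono Suc assms)
  also have "\<dots> = c ^ k * (\<Sum>l\<in>UNIV. H i l)" by (simp add: sum_distrib_left mult.commute)
  also have "\<dots> \<le> c ^ k * c"
  proof -
    have "0 \<le> mat_pow H k i j" using mp_nonneg assms(1) by blast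
    hence "0 \<le> c ^ k" using Suc[of i j] by linarith
    thus ?thesis using assms(2) by (intro mult_left_mono) auto
  qed
  finally show ?case by (simp add: mult.commute)
qed

lemma mp_walk:
  assumes "\<And>a b. \<not> E a b \<Longrightarrow> H a b = 0"
  shows "mat_pow H k i j \<noteq> 0 \<Longrightarrow> walk_len E i j k"
proof (induction k arbitrary: i)
  case 0 then show ?case by (auto simp: walk_len_def split: if_splits)
next
  case (Suc k)
  from Suc.prems obtain l where l: "H i l * mat_pow H k l j \<noteq> 0"
    by (auto elim: sum.not_neutral_contains_not_neutral)
  hence "E i l" using assms by force
  from l have "walk_len E l j k" using Suc.IH by auto
  then obtain p where p: "p 0 = l" "p k = j" "\<forall>m<k. E (p m) (p (Suc m))"
    unfolding walk_len_def by blast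
  define q where "q = (\<lambda>m. if m = 0 then i else p (m - 1))"
  have "q 0 = i" "q (Suc k) = j" using p by (auto simp: q_def)
  moreover have "\<forall>m<Suc k. E (q m) (q (Suc m))"
  proof (intro allI impI)
    fix m assume "m < Suc k"
    then show "E (q m) (q (Suc m))"
      using p \<open>E i l\<close> by (cases m) (auto simp: q_def)
  qed
  ultimately show ?case unfolding walk_len_def by blast
qed

lemma e_pow_le: "(1 + 1 / real k) ^ k \<le> exp 1"
proof (cases "k = 0")
  case True then show ?thesis by simp
next
  case False
  have "(1 + 1 / real k) ^ k \<le> exp (1 / real k) ^ k"
    by (intro power_mono) (auto simp: exp_ge_add_one_self)
  also have "\<dots> = exp (real k * (1 / real k))" by (rule exp_of_nat_mult[symmetric])
  also have "\<dots> = exp 1" using False by simp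
  finally show ?thesis .
qed

lemma fact_lower: "k \<ge> 1 \<Longrightarrow> real k ^ k \<le> fact k * exp (real k - 1)"
proof (induction k rule: dec_induct)
  case base then show ?case by simp
next
  case (step k)
  have k: "real k > 0" using step by simp
  have "real (Suc k) ^ k = real k ^ k * (1 + 1 / real k) ^ k"
    using k by (simp add: power_mult_distrib[symmetric] field_simps)
  also have "\<dots> \<le> real k ^ k * exp 1"
    by (intro mult_left_mono e_pow_le) auto
  finally have A: "real (Suc k) ^ k \<le> real k ^ k * exp 1" .
  have "real (Suc k) ^ Suc k = real (Suc k) * real (Suc k) ^ k" by simp
  also have "\<dots> \<le> real (Suc k) * (real k ^ k * exp 1)"
    by (intro mult_left_mono A) auto
  also have "\<dots> \<le> real (Suc k) * (fact k * exp (real k - 1) * exp 1)"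
    by (intro mult_left_mono mult_right_mono step) auto
  also have "\<dots> = fact (Suc k) * exp (real (Suc k) - 1)"
    by (simp add: exp_add[symmetric] algebra_simps)
  finally show ?case .
qed

theorem mainTheorem3:
  fixes E :: "'v::finite \<Rightarrow> 'v \<Rightarrow> bool"
    and H :: "'v \<Rightarrow> 'v \<Rightarrow> real"
    and h lam t :: real
    and i j :: 'v
  assumes "simple_graph E"
    and "\<And>a b. H a b \<ge> 0"
    and "\<And>a b. \<not> E a b \<Longrightarrow> H a b = 0"
    and "\<And>a b. E a b \<Longrightarrow> H a b \<le> h"
    and "\<And>a. real (degree E a) \<le> lam"
    and "connected_pair E i j"
    and "graph_dist E i j \<ge> 1"
    and "0 \<le> t"
    and "t < real (graph_dist E i j) / (lam * h * exp 1)"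
  shows "mat_exp_entry H t i j
          \<le> (lam * h * t * exp 1 / real (graph_dist E i j)) ^ (graph_dist E i j)
             * ((1 / exp 1) / (1 - lam * h * t * exp 1 / real (graph_dist E i j)))"
proof -
  define d where "d = graph_dist E i j"
  define a where "a = lam * h"
  define x where "x = a * t * exp 1 / real d"
  have d1: "d \<ge> 1" using assms(7) d_def by simp
  have wd: "walk_len E i j d"
    using assms(6) unfolding d_def graph_dist_def connected_pair_def by (rule LeastI_ex)
  have dmin: "\<And>k. walk_len E i j k \<Longrightarrow> d \<le> k"
    unfolding d_def graph_dist_def by (rule Least_le)
  obtain p where p: "p 0 = i" "\<forall>m<d. E (p m) (p (Suc m))"
    using wd unfolding walk_len_def by blast
  have Ei: "E i (p 1)" using p(2)[rule_format, of 0] p(1) d1 by simp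
  have "card {l. E i l} \<ge> 1"
  proof -
    have "{l. E i l} \<noteq> {}" using Ei by blast
    thus ?thesis by (simp add: Suc_leI card_gt_0_iff)
  qed
  hence lam1: "lam \<ge> 1" using assms(5)[of i] unfolding degree_def by linarith
  have h0: "h \<ge> 0" using assms(2)[of i "p 1"] assms(4)[OF Ei] by linarith
  have hpos: "h > 0"
  proof (rule ccontr)
    assume "\<not> h > 0" hence "h = 0" using h0 by simp
    thus False using assms(8,9) by simp
  qed
  have apos: "a > 0" using lam1 hpos a_def by simp
  have rows: "\<And>r. (\<Sum>l\<in>UNIV. H r l) \<le> a"
  proof -
    fix r
    have "(\<Sum>l\<in>UNIV. H r l) = (\<Sum>l\<in>{l. E r l}. H r l)"
      by (rule sum.mono_neutral_right) (auto simp: assms(3))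
    also have "\<dots> \<le> real (card {l. E r l}) * h"
      using sum_bounded_above[of "{l. E r l}" "H r" h] assms(4) by auto
    also have "\<dots> \<le> lam * h" using assms(5)[of r] h0 unfolding degree_def
      by (intro mult_right_mono) auto
    finally show "(\<Sum>l\<in>UNIV. H r l) \<le> a" using a_def by simp
  qed
  have x0: "x \<ge> 0" using x_def apos assms(8) by simp
  have x1: "x < 1"
  proof -
    have tl: "t < real d / (a * exp 1)" using assms(9) unfolding d_def a_def .
    have "t * (a * exp 1) < real d" using tl apos by (simp add: pos_less_divide_eq)
    thus ?thesis using d1 unfolding x_def by (simp add: pos_divide_less_eq mult_ac)
  qed
  define f where "f = (\<lambda>k. t ^ k / fact k * mat_pow H k i j)"
  have f0: "\<And>k. k < d \<Longrightarrow> f k = 0"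
  proof -
    fix k assume "k < d"
    hence nw: "\<not> walk_len E i j k" using dmin[of k] by linarith
    have "mat_pow H k i j \<noteq> 0 \<Longrightarrow> walk_len E i j k" by (rule mp_walk[OF assms(3)])
    hence "mat_pow H k i j = 0" using nw by blast
    thus "f k = 0" by (simp add: f_def)
  qed
  have fnn: "\<And>k. f k \<ge> 0" unfolding f_def
    by (intro mult_nonneg_nonneg divide_nonneg_nonneg zero_le_power mp_nonneg assms(2,8)) auto
  have fb: "\<And>k. k \<ge> d \<Longrightarrow> f k \<le> x ^ k / exp 1"
  proof -
    fix k assume kd: "k \<ge> d"
    hence k1: "k \<ge> 1" using d1 by simp
    have "f k \<le> t ^ k / fact k * a ^ k" unfolding f_def
      by (intro mult_left_mono mp_bound[OF assms(2) rows]) (use assms(8) in auto)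
    also have "\<dots> = (a * t) ^ k / fact k" by (simp add: power_mult_distrib)
    also have "\<dots> \<le> (a * t) ^ k / (real k ^ k / exp (real k - 1))"
    proof -
      have "real k ^ k / exp (real k - 1) \<le> fact k"
        using fact_lower[OF k1] by (simp add: divide_le_eq)
      moreover have "real k ^ k / exp (real k - 1) > 0" using k1 by simp
      moreover have "0 < fact k * (real k ^ k / exp (real k - 1))"
        using calculation(2) by (intro mult_pos_pos) auto
      moreover have "0 \<le> (a * t) ^ k" using apos assms(8) by simp
      ultimately show ?thesis by (intro divide_left_mono)
    qed
    also have "\<dots> = (a * t * exp 1 / real k) ^ k / exp 1"
    proof -
      have "exp (real k - 1) = exp 1 ^ k / exp 1"
        by (simp add: exp_diff exp_of_nat_mult[symmetric])
      thus ?thesis using k1 by (simp add: power_divide power_mult_distrib)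
    qed
    also have "\<dots> \<le> x ^ k / exp 1"
    proof -
      have "a * t * exp 1 / real k \<le> x" unfolding x_def
        using kd d1 apos assms(8) by (intro divide_left_mono) auto
      moreover have "0 \<le> a * t * exp 1 / real k" using apos assms(8) by simp
      ultimately show ?thesis by (intro divide_right_mono power_mono) auto
    qed
    finally show "f k \<le> x ^ k / exp 1" .
  qed
  have fb2: "\<And>k. f k \<le> x ^ k / exp 1"
    by (metis fb f0 not_le x0 divide_nonneg_pos exp_gt_zero zero_le_power)
  have gsum: "summable (\<lambda>k. x ^ k / exp 1)"
    using x0 x1 by (intro summable_divide summable_geometric) auto
  have fsum: "summable f"
    by (rule summable_comparison_test[OF _ gsum]) (use fnn fb2 in auto)
  have "suminf f = (\<Sum>k. f (k + d)) + sum f {..<d}"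
    using suminf_split_initial_segment[OF fsum, of d] by simp
  also have "sum f {..<d} = 0" using f0 by simp
  finally have split: "suminf f = (\<Sum>k. f (k + d))" by simp
  have hsum: "summable (\<lambda>k. x ^ d / exp 1 * x ^ k)"
    using x0 x1 by (intro summable_mult summable_geometric) auto
  have "(\<Sum>k. f (k + d)) \<le> (\<Sum>k. x ^ d / exp 1 * x ^ k)"
  proof (rule suminf_le)
    show "summable (\<lambda>k. f (k + d))" using fsum by (rule summable_ignore_initial_segment)
    show "summable (\<lambda>k. x ^ d / exp 1 * x ^ k)" by (rule hsum)
    fix k show "f (k + d) \<le> x ^ d / exp 1 * x ^ k"
      using fb[of "k + d"] by (simp add: power_add mult.commute)
  qed
  also have "\<dots> = x ^ d / exp 1 * (1 / (1 - x))"
    using x0 x1 by (subst suminf_mult) (auto simp: suminf_geometric)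
  finally have "suminf f \<le> x ^ d * ((1 / exp 1) / (1 - x))" using split by simp
  moreover have "mat_exp_entry H t i j = suminf f" unfolding mat_exp_entry_def f_def by simp
  ultimately show ?thesis unfolding x_def a_def d_def by simp
qed

end
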